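(* Let $G$ be a non-regular simple graph on $n$ vertices, and let $u,v$ be vertices of $G$ with $d_G(u)<d_G(v)$. Let $R:=V(G)\setminus\{u,v\}$, $X:=N(u)\setminus N[v]$, and $Z:=\{w\in R: w\notin N(u)\cup N(v)\}$. If $F_k(G)$ is regular for some integer $k$ with $2\le k\le n-2$, then $X=\emptyset$ and $Z=\emptyset$.
   Context: For a simple graph $G=(V,E)$ on $n$ vertices and an integer $1\le k<n$, the $k$-token graph $F_k(G)$ is the graph whose vertices are all $k$-element subsets of $V$, two such subsets $A,B$ being adjacent whenever their symmetric difference $A\triangle B$ is a pair $\{a,b\}$ with $a$ adjacent to $b$ in $G$. $N(x)$ is the set of neighbors of $x$ in $G$, $N[x]=N(x)\cup\{x\}$, and $d_G(x)=|N(x)|$. *)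

theory Defs
  imports Main
begin

definition simple_graph :: "'a set \<Rightarrow> ('a \<Rightarrow> 'a \<Rightarrow> bool) \<Rightarrow> bool" where
  "simple_graph V E \<longleftrightarrow> finite V \<and> (\<forall>x y. E x y \<longrightarrow> x \<in> V \<and> y \<in> V)
     \<and> (\<forall>x y. E x y \<longrightarrow> E y x) \<and> (\<forall>x. \<not> E x x)"

definition nbhd :: "'a set \<Rightarrow> ('a \<Rightarrow> 'a \<Rightarrow> bool) \<Rightarrow> 'a \<Rightarrow> 'a set" where
  "nbhd V E x = {y \<in> V. E x y}"

definition cnbhd :: "'a set \<Rightarrow> ('a \<Rightarrow> 'a \<Rightarrow> bool) \<Rightarrow> 'a \<Rightarrow> 'a set" where
  "cnbhd V E x = insert x (nbhd V E x)"

definition degree :: "'a set \<Rightarrow> ('a \<Rightarrow> 'a \<Rightarrow> bool) \<Rightarrow> 'a \<Rightarrow> nat" where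
  "degree V E x = card (nbhd V E x)"

definition regular_graph :: "'a set \<Rightarrow> ('a \<Rightarrow> 'a \<Rightarrow> bool) \<Rightarrow> bool" where
  "regular_graph V E \<longleftrightarrow> (\<exists>r. \<forall>x\<in>V. degree V E x = r)"

definition token_vertices :: "'a set \<Rightarrow> nat \<Rightarrow> 'a set set" where
  "token_vertices V k = {A. A \<subseteq> V \<and> card A = k}"

definition token_adj :: "('a \<Rightarrow> 'a \<Rightarrow> bool) \<Rightarrow> 'a set \<Rightarrow> 'a set \<Rightarrow> bool" where
  "token_adj E A B \<longleftrightarrow> (\<exists>a b. A \<union> B - A \<inter> B = {a, b} \<and> a \<noteq> b \<and> E a b)"

definition token_graph_regular :: "'a set \<Rightarrow> ('a \<Rightarrow> 'a \<Rightarrow> bool) \<Rightarrow> nat \<Rightarrow> bool" where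
  "token_graph_regular V E k \<longleftrightarrow>
     regular_graph (token_vertices V k) (token_adj E)"

end

theory Submission
  imports Defs
begin


lemma token_nbhd:
  assumes sg: "simple_graph V E" and A: "A \<subseteq> V" "card A = k"
  shows "nbhd (token_vertices V k) (token_adj E) A
       = (\<lambda>(a,b). insert b (A - {a})) ` {(a,b). a \<in> A \<and> b \<in> V - A \<and> E a b}"
proof -
  have fV: "finite V" and sym: "\<And>x y. E x y \<Longrightarrow> E y x" using sg by (auto simp: simple_graph_def)
  have fA: "finite A" using fV A(1) finite_subset by blast
  show ?thesis
  proof
    show "nbhd (token_vertices V k) (token_adj E) A
       \<subseteq> (\<lambda>(a,b). insert b (A - {a})) ` {(a,b). a \<in> A \<and> b \<in> V - A \<and> E a b}"
    proof
      fix B assume "B \<in> nbhd (token_vertices V k) (token_adj E) A"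
      then obtain a b where B: "B \<subseteq> V" "card B = k" and ab: "A \<union> B - A \<inter> B = {a, b}" "a \<noteq> b" "E a b"
        by (auto simp: nbhd_def token_vertices_def token_adj_def)
      have fB: "finite B" using fV B(1) finite_subset by blast
      have c1: "card (A - B) = card (B - A)"
        using card_Diff_subset_Int[of A B] card_Diff_subset_Int[of B A] fA fB A B
        by (simp add: Int_commute)
      have dis: "(A - B) \<inter> (B - A) = {}" by blast
      have un: "(A - B) \<union> (B - A) = {a, b}" using ab by blast
      have "card (A - B) + card (B - A) = 2"
        using card_Un_disjoint[of "A - B" "B - A"] fA fB dis un ab(2) by simp
      hence "card (A - B) = Suc 0" "card (B - A) = Suc 0" using c1 by auto
      then obtain x y where xy: "A - B = {x}" "B - A = {y}" by (metis card_1_singleton_iff)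
      have Exy: "E x y" using un xy ab sym by (auto simp: doubleton_eq_iff)
      have "B = insert y (A - {x})" using xy by blast
      moreover have "(x, y) \<in> {(a,b). a \<in> A \<and> b \<in> V - A \<and> E a b}" using xy Exy B by auto
      ultimately show "B \<in> (\<lambda>(a,b). insert b (A - {a})) ` {(a,b). a \<in> A \<and> b \<in> V - A \<and> E a b}"
        by force
    qed
  next
    show "(\<lambda>(a,b). insert b (A - {a})) ` {(a,b). a \<in> A \<and> b \<in> V - A \<and> E a b}
       \<subseteq> nbhd (token_vertices V k) (token_adj E) A"
    proof clarify
      fix a b assume ab: "a \<in> A" "b \<in> V" "b \<notin> A" "E a b"
      have "k > 0" using fA ab A card_gt_0_iff by blast
      hence "card (insert b (A - {a})) = k" using fA ab A by (simp add: card_Diff_singleton)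
      moreover have "A \<union> insert b (A - {a}) - A \<inter> insert b (A - {a}) = {a, b}" using ab by blast
      moreover have "a \<noteq> b" using ab by blast
      ultimately show "insert b (A - {a}) \<in> nbhd (token_vertices V k) (token_adj E) A"
        using ab A unfolding nbhd_def token_vertices_def token_adj_def by blast
    qed
  qed
qed

lemma token_degree:
  assumes sg: "simple_graph V E" and A: "A \<subseteq> V" "card A = k"
  shows "degree (token_vertices V k) (token_adj E) A = (\<Sum>a\<in>A. card (nbhd V E a - A))"
proof -
  have fV: "finite V" using sg by (auto simp: simple_graph_def)
  have fA: "finite A" using fV A(1) finite_subset by blast
  let ?C = "{(a,b). a \<in> A \<and> b \<in> V - A \<and> E a b}"
  have inj: "inj_on (\<lambda>(a,b). insert b (A - {a})) ?C"
  proof (rule inj_onI, clarify)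
    fix a b a' b' assume h: "a \<in> A" "b \<in> V" "b \<notin> A" "E a b" "a' \<in> A" "b' \<in> V" "b' \<notin> A" "E a' b'"
      and eq: "insert b (A - {a}) = insert b' (A - {a'})"
    have "b = b'" using h eq by blast
    moreover have "a = a'"
    proof (rule ccontr)
      assume "a \<noteq> a'"
      hence "a \<in> insert b' (A - {a'})" using h by blast
      hence "a \<in> insert b (A - {a})" using eq by simp
      thus False using h by blast
    qed
    ultimately show "a = a' \<and> b = b'" by simp
  qed
  have "?C = Sigma A (\<lambda>a. nbhd V E a - A)" by (auto simp: nbhd_def)
  hence "card ?C = (\<Sum>a\<in>A. card (nbhd V E a - A))"
    using fA fV by (simp add: card_SigmaI nbhd_def)
  thus ?thesis using token_nbhd[OF assms] card_image[OF inj] by (simp add: degree_def)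
qed


lemma token_degree_insert:
  assumes sg: "simple_graph V E" and S: "S \<subseteq> V" and x: "x \<in> V" "x \<notin> S"
    and k: "card (insert x S) = k"
  shows "int (degree (token_vertices V k) (token_adj E) (insert x S))
       = (\<Sum>a\<in>S. int (card (nbhd V E a - S))) + int (degree V E x) - 2 * (\<Sum>w\<in>S. of_bool (E x w))"
proof -
  have fV: "finite V" and sym: "\<And>x y. E x y \<Longrightarrow> E y x" and irr: "\<And>x. \<not> E x x"
    using sg by (auto simp: simple_graph_def)
  have fS: "finite S" using fV S finite_subset by blast
  have fN: "\<And>a. finite (nbhd V E a)" using fV by (simp add: nbhd_def)
  have d: "degree (token_vertices V k) (token_adj E) (insert x S)
     = card (nbhd V E x - insert x S) + (\<Sum>a\<in>S. card (nbhd V E a - insert x S))"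
    using token_degree[OF sg _ k] S x fS by simp
  have e1: "nbhd V E x - insert x S = nbhd V E x - S" using irr by (auto simp: nbhd_def)
  have e2: "card (nbhd V E x) = card (nbhd V E x - S) + card (nbhd V E x \<inter> S)"
  proof -
    have "nbhd V E x = (nbhd V E x - S) \<union> (nbhd V E x \<inter> S)" by blast
    moreover have "(nbhd V E x - S) \<inter> (nbhd V E x \<inter> S) = {}" by blast
    ultimately show ?thesis using fN[of x] card_Un_disjoint[of "nbhd V E x - S" "nbhd V E x \<inter> S"]
      by (metis finite_Diff finite_Int)
  qed
  have e3: "(\<Sum>w\<in>S. (of_bool (E x w)::int)) = int (card (nbhd V E x \<inter> S))"
  proof -
    have "S \<inter> {w. E x w} = nbhd V E x \<inter> S" using S by (auto simp: nbhd_def)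
    thus ?thesis using fS by simp
  qed
  have e4: "int (card (nbhd V E a - insert x S)) = int (card (nbhd V E a - S)) - of_bool (E a x)"
    if a: "a \<in> S" for a
  proof -
    let ?T = "nbhd V E a - insert x S"
    have num: "\<And>p q::nat. p = Suc q \<Longrightarrow> int q = int p - 1" by simp
    show ?thesis
    proof (cases "E a x")
      case True
      have eq: "nbhd V E a - S = insert x ?T" unfolding nbhd_def using x True by blast
      have "card (insert x ?T) = Suc (card ?T)" by (rule card_insert_disjoint) (use fN[of a] in auto)
      hence "card (nbhd V E a - S) = Suc (card ?T)" by (subst eq)
      from num[OF this] show ?thesis using True by (simp only: of_bool_eq)
    next
      case False
      have eq: "nbhd V E a - S = ?T" unfolding nbhd_def using False by blast
      have "int (card ?T) = int (card (nbhd V E a - S))" by (subst eq) (rule refl)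
      thus ?thesis using False by (simp only: of_bool_eq diff_0_right)
    qed
  qed
  have e5: "(\<Sum>a\<in>S. (of_bool (E a x)::int)) = (\<Sum>w\<in>S. of_bool (E x w))"
  proof (rule sum.cong[OF refl])
    fix a
    have "E a x = E x a" using sym[of a x] sym[of x a] by blast
    thus "(of_bool (E a x)::int) = of_bool (E x a)" by (simp only:)
  qed
  have "int (degree (token_vertices V k) (token_adj E) (insert x S))
     = int (card (nbhd V E x - S)) + (\<Sum>a\<in>S. int (card (nbhd V E a - insert x S)))"
    using d e1 by simp
  also have "(\<Sum>a\<in>S. int (card (nbhd V E a - insert x S)))
      = (\<Sum>a\<in>S. int (card (nbhd V E a - S))) - (\<Sum>a\<in>S. of_bool (E a x))"
    using e4 by (simp add: sum_subtractf)
  finally show ?thesis using e2 e3 e5 by (simp add: degree_def)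
qed


theorem corollary2:
  fixes V :: "'a set" and E :: "'a \<Rightarrow> 'a \<Rightarrow> bool" and u v :: 'a and k :: nat
  assumes "simple_graph V E"
    and "\<not> regular_graph V E"
    and "u \<in> V" and "v \<in> V"
    and "degree V E u < degree V E v"
    and "2 \<le> k" and "k \<le> card V - 2"
    and "token_graph_regular V E k"
  shows "nbhd V E u - cnbhd V E v = {}
       \<and> {w \<in> V - {u, v}. w \<notin> nbhd V E u \<union> nbhd V E v} = {}"
proof -
  note sg = assms(1)
  have fV: "finite V" and irr: "\<And>x. \<not> E x x"
    using sg by (auto simp: simple_graph_def)
  have uv: "u \<noteq> v" using assms(5) by auto
  define R where "R = V - {u, v}"
  define g where "g w = (of_bool (E v w) - of_bool (E u w) :: int)" for w
  define D where "D = int (degree V E v) - int (degree V E u)"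
  have Dpos: "D > 0" using assms(5) by (simp add: D_def)
  have fR: "finite R" using fV by (simp add: R_def)
  have cR: "card R = card V - 2" using assms(3,4) uv fV by (simp add: R_def card_Diff_subset)
  obtain r where reg: "\<And>A. A \<in> token_vertices V k \<Longrightarrow> degree (token_vertices V k) (token_adj E) A = r"
    using assms(8) by (auto simp: token_graph_regular_def regular_graph_def)
  have KS: "2 * (\<Sum>w\<in>S. g w) = D" if S: "S \<subseteq> R" "card S = k - 1" for S
  proof -
    have SV: "S \<subseteq> V" and nu: "u \<notin> S" and nv: "v \<notin> S" using S by (auto simp: R_def)
    have fS: "finite S" using fR S finite_subset by blast
    have cu: "card (insert u S) = k" using nu fS S assms(6) by simp
    have cv: "card (insert v S) = k" using nv fS S assms(6) by simp
    have "degree (token_vertices V k) (token_adj E) (insert u S) = r"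
      using reg cu SV assms(3) by (simp add: token_vertices_def)
    moreover have "degree (token_vertices V k) (token_adj E) (insert v S) = r"
      using reg cv SV assms(4) by (simp add: token_vertices_def)
    moreover note token_degree_insert[OF sg SV assms(3) nu cu]
      token_degree_insert[OF sg SV assms(4) nv cv]
    ultimately have "2 * (\<Sum>w\<in>S. (of_bool (E v w)::int)) - 2 * (\<Sum>w\<in>S. of_bool (E u w)) = D"
      by (simp add: D_def)
    thus ?thesis by (simp add: g_def sum_subtractf right_diff_distrib)
  qed
  have pair: "g w = g w'" if w: "w \<in> R" "w' \<in> R" "w \<noteq> w'" for w w'
  proof -
    have "card (R - {w, w'}) = card R - 2" using w fR by (simp add: card_Diff_subset)
    hence "k - 2 \<le> card (R - {w, w'})" using cR assms(6,7) by simp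
    then obtain T where T: "T \<subseteq> R - {w, w'}" "card T = k - 2" "finite T"
      by (rule obtain_subset_with_card_n)
    have nT: "w \<notin> T" "w' \<notin> T" using T by auto
    have c1: "card (insert w T) = k - 1" and c2: "card (insert w' T) = k - 1"
      using T nT assms(6) by auto
    have "2 * (\<Sum>x\<in>insert w T. g x) = D" by (rule KS) (use T w c1 in auto)
    moreover have "2 * (\<Sum>x\<in>insert w' T. g x) = D" by (rule KS) (use T w c2 in auto)
    ultimately show ?thesis using T nT by simp
  qed
  have good: "E v w \<and> \<not> E u w" if w: "w \<in> R" for w
  proof -
    have "card (R - {w}) = card R - 1" using w fR by simp
    hence "k - 2 \<le> card (R - {w})" using cR assms(6,7) by simp
    then obtain T where T: "T \<subseteq> R - {w}" "card T = k - 2" "finite T"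
      by (rule obtain_subset_with_card_n)
    have nT: "w \<notin> T" using T by auto
    have c1: "card (insert w T) = k - 1" using T nT assms(6) by auto
    have "2 * (\<Sum>x\<in>insert w T. g x) = D" by (rule KS) (use T w c1 in auto)
    moreover have "(\<Sum>x\<in>insert w T. g x) = (\<Sum>x\<in>insert w T. g w)"
    proof (rule sum.cong[OF refl])
      fix x assume "x \<in> insert w T"
      thus "g x = g w" using pair[of x w] T w by auto
    qed
    ultimately have "2 * (int (k - 1) * g w) = D" using c1 by simp
    hence "g w > 0" using Dpos assms(6)
      by (smt (verit, ccfv_SIG) mult_nonneg_nonpos of_nat_0_le_iff)
    thus ?thesis by (auto simp: g_def)
  qed
  show ?thesis
  proof
    show "nbhd V E u - cnbhd V E v = {}"
    proof (rule ccontr)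
      assume "nbhd V E u - cnbhd V E v \<noteq> {}"
      then obtain x where x: "x \<in> V" "E u x" "x \<noteq> v" "\<not> E v x"
        by (auto simp: nbhd_def cnbhd_def)
      have "x \<noteq> u" using x irr by auto
      hence "x \<in> R" using x by (auto simp: R_def)
      thus False using good x by blast
    qed
    show "{w \<in> V - {u, v}. w \<notin> nbhd V E u \<union> nbhd V E v} = {}"
      using good by (auto simp: R_def nbhd_def)
  qed
qed

end
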